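(* Let $U, X, Y, Z$ be uncertain variables on a common set $\Omega$, with finite ranges, forming a Markov chain $U - X - Y - Z$. Then $\mathcal{L}(U\rightarrow Z)\leq \mathcal{L}(U\rightarrow Y)$.
   Context: Let $\Omega$ be a set. An uncertain variable (uv) is a map $X:\Omega\to\mathbb{X}$ into some set; all uvs considered have finite ranges. The range of $X$ is $[\![X]\!]:=\{X(\omega):\omega\in\Omega\}$; the joint range of $X,Y$ is $[\![X,Y]\!]:=\{(X(\omega),Y(\omega)):\omega\in\Omega\}$; the conditional range is $[\![X\mid Y(\omega)=y]\!]:=\{X(\omega):\omega\in\Omega,\ Y(\omega)=y\}$, and similarly $[\![X\mid Z(\omega)=z,Y(\omega)=y]\!]:=\{X(\omega):\omega\in\Omega,\ Z(\omega)=z,\ Y(\omega)=y\}$. Uvs $X$ and $Y$ are unrelated if $[\![X\mid Y(\omega)=y]\!]=[\![X]\!]$ for all $y\in[\![Y]\!]$ and $[\![Y\mid X(\omega)=x]\!]=[\![Y]\!]$ for all $x\in[\![X]\!]$. Uvs $X,Y,Z$ form a Markov chain $X-Y-Z$ if $[\![X\mid Z(\omega)=z,Y(\omega)=y]\!]=[\![X\mid Y(\omega)=y]\!]$ for all $(z,y)\in[\![Z,Y]\!]$; $X_1-X_2-\cdots-X_n$ is a Markov chain if $X_i-X_j-X_\ell$ is a Markov chain for all $1\le i<j<\ell\le n$. The non-stochastic brute-force guessing leakage from a uv $U$ to a uv $Y$ is $$\mathcal{L}(U\rightarrow Y):=\log_2\left(\frac{|[\![U]\!]|}{\min_{y\in[\![Y]\!]}|[\![U\mid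 Y(\omega)=y]\!]|}\right)=\max_{y\in[\![Y]\!]}\log_2\left(\frac{|[\![U]\!]|}{|[\![U\mid Y(\omega)=y]\!]|}\right).$$ *)

theory Defs
  imports Complex_Main
begin

text \<open>Uncertain variables are functions on a common sample set \<Omega> (a carrier set).\<close>

definition urange :: "'o set \<Rightarrow> ('o \<Rightarrow> 'a) \<Rightarrow> 'a set" where
  "urange \<Omega> X = X ` \<Omega>"

definition ujrange :: "'o set \<Rightarrow> ('o \<Rightarrow> 'a) \<Rightarrow> ('o \<Rightarrow> 'b) \<Rightarrow> ('a \<times> 'b) set" where
  "ujrange \<Omega> X Y = (\<lambda>\<omega>. (X \<omega>, Y \<omega>)) ` \<Omega>"

definition ucrange :: "'o set \<Rightarrow> ('o \<Rightarrow> 'a) \<Rightarrow> ('o \<Rightarrow> 'b) \<Rightarrow> 'b \<Rightarrow> 'a set" where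
  "ucrange \<Omega> X Y y = {X \<omega> | \<omega>. \<omega> \<in> \<Omega> \<and> Y \<omega> = y}"

definition ucrange2 :: "'o set \<Rightarrow> ('o \<Rightarrow> 'a) \<Rightarrow> ('o \<Rightarrow> 'c) \<Rightarrow> 'c \<Rightarrow> ('o \<Rightarrow> 'b) \<Rightarrow> 'b \<Rightarrow> 'a set" where
  "ucrange2 \<Omega> X Z z Y y = {X \<omega> | \<omega>. \<omega> \<in> \<Omega> \<and> Z \<omega> = z \<and> Y \<omega> = y}"

definition markov3 :: "'o set \<Rightarrow> ('o \<Rightarrow> 'a) \<Rightarrow> ('o \<Rightarrow> 'b) \<Rightarrow> ('o \<Rightarrow> 'c) \<Rightarrow> bool" where
  "markov3 \<Omega> X Y Z \<longleftrightarrow>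
     (\<forall>(z, y) \<in> ujrange \<Omega> Z Y. ucrange2 \<Omega> X Z z Y y = ucrange \<Omega> X Y y)"

definition markov4 :: "'o set \<Rightarrow> ('o \<Rightarrow> 'u) \<Rightarrow> ('o \<Rightarrow> 'a) \<Rightarrow> ('o \<Rightarrow> 'b) \<Rightarrow> ('o \<Rightarrow> 'c) \<Rightarrow> bool" where
  "markov4 \<Omega> U X Y Z \<longleftrightarrow>
     markov3 \<Omega> U X Y \<and> markov3 \<Omega> U X Z \<and> markov3 \<Omega> U Y Z \<and> markov3 \<Omega> X Y Z"

definition leakage :: "'o set \<Rightarrow> ('o \<Rightarrow> 'u) \<Rightarrow> ('o \<Rightarrow> 'b) \<Rightarrow> real" where
  "leakage \<Omega> U Y =
     log 2 (real (card (urange \<Omega> U)) /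
            real (Min ((\<lambda>y. card (ucrange \<Omega> U Y y)) ` urange \<Omega> Y)))"

end

theory Submission
  imports Defs
begin

theorem proposition1:
  fixes \<Omega> :: "'o set"
    and U :: "'o \<Rightarrow> 'u" and X :: "'o \<Rightarrow> 'a" and Y :: "'o \<Rightarrow> 'b" and Z :: "'o \<Rightarrow> 'c"
  assumes "\<Omega> \<noteq> {}"
    and "finite (urange \<Omega> U)" and "finite (urange \<Omega> X)"
    and "finite (urange \<Omega> Y)" and "finite (urange \<Omega> Z)"
    and "markov4 \<Omega> U X Y Z"
  shows "leakage \<Omega> U Z \<le> leakage \<Omega> U Y"
proof -
  have M: "markov3 \<Omega> U Y Z" using assms(6) unfolding markov4_def by simp
  have sub: "\<And>V::'o\<Rightarrow>'e. \<And>v. ucrange \<Omega> U V v \<subseteq> urange \<Omega> U"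
    unfolding ucrange_def urange_def by auto
  have fin: "\<And>V::'o\<Rightarrow>'e. \<And>v. finite (ucrange \<Omega> U V v)"
    using sub assms(2) finite_subset by metis
  have ne: "\<And>V::'o\<Rightarrow>'e. \<And>v. v \<in> urange \<Omega> V \<Longrightarrow> ucrange \<Omega> U V v \<noteq> {}"
    unfolding ucrange_def urange_def by auto
  define mY where "mY = Min ((\<lambda>y. card (ucrange \<Omega> U Y y)) ` urange \<Omega> Y)"
  define mZ where "mZ = Min ((\<lambda>z. card (ucrange \<Omega> U Z z)) ` urange \<Omega> Z)"
  have neY: "urange \<Omega> Y \<noteq> {}" and neZ: "urange \<Omega> Z \<noteq> {}"
    using assms(1) unfolding urange_def by auto
  obtain y0 where y0: "y0 \<in> urange \<Omega> Y" "mY = card (ucrange \<Omega> U Y y0)"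
  proof -
    have "mY \<in> (\<lambda>y. card (ucrange \<Omega> U Y y)) ` urange \<Omega> Y"
      unfolding mY_def using assms(4) neY by (intro Min_in) auto
    thus ?thesis using that by blast
  qed
  have mYpos: "mY > 0" using y0 fin[of Y y0] ne[of y0 Y] by (simp add: card_gt_0_iff)
  obtain z0 where z0: "z0 \<in> urange \<Omega> Z" "mZ = card (ucrange \<Omega> U Z z0)"
  proof -
    have "mZ \<in> (\<lambda>z. card (ucrange \<Omega> U Z z)) ` urange \<Omega> Z"
      unfolding mZ_def using assms(5) neZ by (intro Min_in) auto
    thus ?thesis using that by blast
  qed
  obtain \<omega> where w: "\<omega> \<in> \<Omega>" "Z \<omega> = z0" using z0(1) unfolding urange_def by auto
  define y where "y = Y \<omega>"
  have yin: "y \<in> urange \<Omega> Y" using w unfolding y_def urange_def by auto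
  have "(z0, y) \<in> ujrange \<Omega> Z Y" using w unfolding y_def ujrange_def by auto
  hence eq: "ucrange2 \<Omega> U Z z0 Y y = ucrange \<Omega> U Y y" using M unfolding markov3_def by auto
  have "ucrange2 \<Omega> U Z z0 Y y \<subseteq> ucrange \<Omega> U Z z0"
    unfolding ucrange2_def ucrange_def by auto
  hence "card (ucrange \<Omega> U Y y) \<le> card (ucrange \<Omega> U Z z0)"
    using eq fin[of Z z0] by (metis card_mono)
  moreover have "mY \<le> card (ucrange \<Omega> U Y y)"
    unfolding mY_def using yin assms(4) by auto
  ultimately have le: "mY \<le> mZ" using z0 by simp
  have Upos: "card (urange \<Omega> U) > 0"
    using assms(1,2) unfolding urange_def by (simp add: card_gt_0_iff)
  have "real (card (urange \<Omega> U)) / real mZ \<le> real (card (urange \<Omega> U)) / real mY"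
    using le mYpos Upos by (intro divide_left_mono) auto
  moreover have "real (card (urange \<Omega> U)) / real mZ > 0" using le mYpos Upos by auto
  ultimately have "log 2 (real (card (urange \<Omega> U)) / real mZ) \<le> log 2 (real (card (urange \<Omega> U)) / real mY)"
    by simp
  thus ?thesis unfolding leakage_def mY_def mZ_def .
qed

end
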